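(* Let $\Omega$ be an infinite set, $\kappa$ a regular infinite cardinal with $\kappa\le|\Omega|$, $d$ a $\kappa$-uncrowded (respectively, uniformly $\kappa$-uncrowded) generalized metric on $\Omega$, and $G$ a subgroup of $S=\mathrm{Sym}(\Omega)$ all of whose elements are bounded with respect to $d$. Then for any subset $U\subseteq\mathrm{Sym}(\Omega)$ with $|U|<\kappa$, there exists a generalized metric $d'\le d$ on $\Omega$, again $\kappa$-uncrowded (respectively, uniformly $\kappa$-uncrowded), such that every element of $U$, and hence every element of $\langle G\cup U\rangle$, is bounded with respect to $d'$. Consequently, for subgroups of $S$, the property that there exists a (uniformly) $\kappa$-uncrowded generalized metric on $\Omega$ with respect to which every element of the subgroup is bounded is inherited by every subgroup $H$ with $H\preccurlyeq_\kappa G$, in particular by every $H$ with $H\approx_\kappa G$.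
   Context: $\mathrm{Sym}(\Omega)$ is the group of all permutations of $\Omega$, acting on the right. Let $P=\{r\in\mathbb R:r\ge0\}\cup\{\infty\}$. A generalized metric on $\Omega$ is a function $d:\Omega\times\Omega\to P$ satisfying the usual metric axioms (with values allowed to be $\infty$). $B_d(\alpha,r)=\{\beta:d(\alpha,\beta)<r\}$. $d$ is $\kappa$-uncrowded if $|B_d(\alpha,r)|<\kappa$ for all $\alpha\in\Omega$ and all $r<\infty$; uniformly $\kappa$-uncrowded if for every $r<\infty$ there is a cardinal $\lambda<\kappa$ with $|B_d(\alpha,r)|\le\lambda$ for all $\alpha$. $d'\le d$ means $d'(\alpha,\beta)\le d(\alpha,\beta)$ for all $\alpha,\beta$. For $g\in\mathrm{Sym}(\Omega)$, $\|g\|_d=\sup_{\alpha\in\Omega}d(\alpha,\alpha g)$, and $g$ is bounded if $\|g\|_d<\infty$. For subgroups $G_1,G_2\le S$, $G_1\preccurlyeq_\kappa G_2$ means there is $U\subseteq S$ with $|U|<\kappa$ and $G_1\le\langle G_2\cup U\rangle$; $G_1\approx_\kappa G_2$ means both $G_1\preccurlyeq_\kappa G_2$ and $G_2\preccurlyeq_\kappa G_1$. *)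

theory Defs
  imports "HOL-Algebra.Bij" "HOL-Algebra.Generated_Groups" "HOL-Library.Extended_Nonnegative_Real"
begin

notation
  ordLeq2 (infix \<open><=o\<close> 50) and
  ordLeq3 (infix \<open>\<le>o\<close> 50) and
  ordLess2 (infix \<open><o\<close> 50) and
  ordIso2 (infix \<open>=o\<close> 50) and
  card_of (\<open>|_|\<close>)

text \<open>Omega is the universe of the type 'a; Sym(Omega) is BijGroup UNIV.
  Values in P = [0,\<infinity>] are modelled by ennreal.
  Cardinals are card-order relations; |A| < kappa is |A| <o kappa.\<close>

abbreviation Sym :: "('a \<Rightarrow> 'a) monoid" where
  "Sym \<equiv> BijGroup (UNIV :: 'a set)"

definition gen_metric :: "('a \<Rightarrow> 'a \<Rightarrow> ennreal) \<Rightarrow> bool" where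
  "gen_metric d \<longleftrightarrow>
     (\<forall>x y. d x y = 0 \<longleftrightarrow> x = y) \<and>
     (\<forall>x y. d x y = d y x) \<and>
     (\<forall>x y z. d x z \<le> d x y + d y z)"

definition ball_d :: "('a \<Rightarrow> 'a \<Rightarrow> ennreal) \<Rightarrow> 'a \<Rightarrow> ennreal \<Rightarrow> 'a set" where
  "ball_d d x r = {y. d x y < r}"

definition uncrowded :: "'k rel \<Rightarrow> ('a \<Rightarrow> 'a \<Rightarrow> ennreal) \<Rightarrow> bool" where
  "uncrowded k d \<longleftrightarrow> (\<forall>x r. r < \<infinity> \<longrightarrow> |ball_d d x r| <o k)"

definition unif_uncrowded :: "'k rel \<Rightarrow> ('a \<Rightarrow> 'a \<Rightarrow> ennreal) \<Rightarrow> bool" where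
  "unif_uncrowded k d \<longleftrightarrow>
     (\<forall>r. r < \<infinity> \<longrightarrow> (\<exists>l :: 'a rel. Card_order l \<and> l <o k \<and> (\<forall>x. |ball_d d x r| \<le>o l)))"

definition perm_norm :: "('a \<Rightarrow> 'a \<Rightarrow> ennreal) \<Rightarrow> ('a \<Rightarrow> 'a) \<Rightarrow> ennreal" where
  "perm_norm d g = (SUP x. d x (g x))"

definition bounded_perm :: "('a \<Rightarrow> 'a \<Rightarrow> ennreal) \<Rightarrow> ('a \<Rightarrow> 'a) \<Rightarrow> bool" where
  "bounded_perm d g \<longleftrightarrow> perm_norm d g < \<infinity>"

definition le_metric :: "('a \<Rightarrow> 'a \<Rightarrow> ennreal) \<Rightarrow> ('a \<Rightarrow> 'a \<Rightarrow> ennreal) \<Rightarrow> bool" where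
  "le_metric d' d \<longleftrightarrow> (\<forall>x y. d' x y \<le> d x y)"

definition preceq_k :: "'k rel \<Rightarrow> ('a \<Rightarrow> 'a) set \<Rightarrow> ('a \<Rightarrow> 'a) set \<Rightarrow> bool" where
  "preceq_k k G1 G2 \<longleftrightarrow>
     (\<exists>U. U \<subseteq> carrier Sym \<and> |U| <o k \<and> G1 \<subseteq> generate Sym (G2 \<union> U))"

definition approx_k :: "'k rel \<Rightarrow> ('a \<Rightarrow> 'a) set \<Rightarrow> ('a \<Rightarrow> 'a) set \<Rightarrow> bool" where
  "approx_k k G1 G2 \<longleftrightarrow> preceq_k k G1 G2 \<and> preceq_k k G2 G1"

end

theory Submission
  imports Defs
begin


definition stepc :: "('a \<Rightarrow> 'a \<Rightarrow> ennreal) \<Rightarrow> ('a \<Rightarrow> 'a) set \<Rightarrow> 'a \<Rightarrow> 'a \<Rightarrow> ennreal" where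
  "stepc d U x y = min (d x y) (if (\<exists>u\<in>U. y = u x \<or> x = u y) then 1 else \<infinity>)"

fun pc :: "('a \<Rightarrow> 'a \<Rightarrow> ennreal) \<Rightarrow> ('a \<Rightarrow> 'a) set \<Rightarrow> 'a \<Rightarrow> 'a list \<Rightarrow> 'a \<Rightarrow> ennreal" where
  "pc d U x [] y = stepc d U x y"
| "pc d U x (z # zs) y = stepc d U x z + pc d U z zs y"

definition dU :: "('a \<Rightarrow> 'a \<Rightarrow> ennreal) \<Rightarrow> ('a \<Rightarrow> 'a) set \<Rightarrow> 'a \<Rightarrow> 'a \<Rightarrow> ennreal" where
  "dU d U x y = (INF zs. pc d U x zs y)"

lemma stepc_sym: assumes "gen_metric d" shows "stepc d U x y = stepc d U y x"
proof -
  have "(\<exists>u\<in>U. y = u x \<or> x = u y) = (\<exists>u\<in>U. x = u y \<or> y = u x)" by blast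
  moreover have "d x y = d y x" using assms unfolding gen_metric_def by blast
  ultimately show ?thesis unfolding stepc_def by simp
qed

lemma stepc_le: "stepc d U x y \<le> d x y"
  unfolding stepc_def by simp

lemma stepc_le1: "u \<in> U \<Longrightarrow> stepc d U x (u x) \<le> 1"
  unfolding stepc_def by auto

lemma stepc_cases:
  "stepc d U x y = d x y \<or> (stepc d U x y = 1 \<and> (\<exists>u\<in>U. y = u x \<or> x = u y))"
  unfolding stepc_def by (auto simp: min_def)

lemma pc_append: "pc d U x (zs @ y # ws) z = pc d U x zs y + pc d U y ws z"
  by (induction zs arbitrary: x) (auto simp: add.assoc)

lemma pc_rev: assumes "gen_metric d" shows "pc d U x zs y = pc d U y (rev zs) x"
proof (induction zs arbitrary: x)
  case Nil then show ?case using stepc_sym[OF assms] by simp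
next
  case (Cons z zs)
  have "pc d U y (rev (z # zs)) x = pc d U y (rev zs) z + pc d U z [] x"
    using pc_append[of d U y "rev zs" z "[]" x] by simp
  then show ?case using Cons stepc_sym[OF assms, of U x z] by (simp add: add.commute)
qed

lemma min1_le_stepc: "min 1 (d x y) \<le> stepc d U x y"
proof (cases "\<exists>u\<in>U. y = u x \<or> x = u y")
  case True then show ?thesis unfolding stepc_def by (simp add: min.commute)
next
  case False then show ?thesis unfolding stepc_def by simp
qed

lemma pc_lower: assumes "gen_metric d" shows "min 1 (d x y) \<le> pc d U x zs y"
proof (induction zs arbitrary: x)
  case Nil then show ?case using min1_le_stepc by simp
next
  case (Cons z zs)
  have a: "min 1 (d x z) \<le> stepc d U x z" using min1_le_stepc .
  have b: "min 1 (d z y) \<le> pc d U z zs y" using Cons .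
  have tri: "d x y \<le> d x z + d z y" using assms unfolding gen_metric_def by blast
  have "min 1 (d x y) \<le> min 1 (d x z) + min 1 (d z y)"
  proof (cases "d x z \<le> 1 \<and> d z y \<le> 1")
    case True then show ?thesis using tri by (auto simp: min_def)
  next
    case False
    then have "min 1 (d x z) = 1 \<or> min 1 (d z y) = 1" by (auto simp: min_def)
    then have "1 \<le> min 1 (d x z) + min 1 (d z y)" by (elim disjE) simp_all
    moreover have "min 1 (d x y) \<le> 1" by simp
    ultimately show ?thesis by (rule order_trans[rotated])
  qed
  also have "\<dots> \<le> pc d U x (z # zs) y" using add_mono[OF a b] by simp
  finally show ?case .
qed

lemma Inf_add_const_ennreal:
  fixes A :: "ennreal set"
  assumes "A \<noteq> {}"
  shows "Inf ((\<lambda>x. x + c) ` A) = Inf A + c"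
  using continuous_at_Inf_mono[of "\<lambda>x. x + c" A]
  using continuous_add[of "at_right (Inf A)" "\<lambda>x. x" "\<lambda>x. c"] assms
  by (auto simp: mono_def)

lemma INF_add_ennreal_gen:
  fixes f :: "'b \<Rightarrow> ennreal"
  shows "(INF i. f i + c) = (INF i. f i) + c"
  using Inf_add_const_ennreal[of "range f" c] by (simp add: image_comp)

lemma dU_le: "dU d U x y \<le> d x y"
proof -
  have "dU d U x y \<le> pc d U x [] y" unfolding dU_def by (rule INF_lower) simp
  then show ?thesis using stepc_le[of d U x y] by simp
qed

lemma dU_le_stepc: "dU d U x y \<le> stepc d U x y"
proof -
  have "dU d U x y \<le> pc d U x [] y" unfolding dU_def by (rule INF_lower) simp
  then show ?thesis by simp
qed

lemma dU_metric: assumes "gen_metric d" shows "gen_metric (dU d U)"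
  unfolding gen_metric_def
proof (intro conjI allI)
  fix x y
  show "(dU d U x y = 0) = (x = y)"
  proof
    assume "dU d U x y = 0"
    have "min 1 (d x y) \<le> dU d U x y" unfolding dU_def
      by (rule INF_greatest) (rule pc_lower[OF assms])
    then have "d x y = 0" using \<open>dU d U x y = 0\<close> by (auto simp: min_def split: if_splits)
    then show "x = y" using assms unfolding gen_metric_def by blast
  next
    assume "x = y"
    then show "dU d U x y = 0" using dU_le[of d U y y] assms unfolding gen_metric_def by (metis le_zero_eq)
  qed
next
  fix x y
  have "dU d U x y = (INF zs. pc d U y (rev zs) x)" unfolding dU_def using pc_rev[OF assms] by simp
  also have "\<dots> = (INF zs \<in> range rev. pc d U y zs x)" by (simp add: image_comp)
  also have "range rev = (UNIV :: 'a list set)" by (metis surj_def rev_rev_ident)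
  finally show "dU d U x y = dU d U y x" unfolding dU_def by simp
next
  fix x y z
  have "dU d U x z \<le> (INF zs. INF ws. pc d U x zs y + pc d U y ws z)"
    unfolding dU_def
    by (intro INF_greatest INF_lower2[of "zs @ y # ws" for zs ws]) (auto simp: pc_append)
  also have "\<dots> = (INF zs. pc d U x zs y + (INF ws. pc d U y ws z))"
    using INF_add_ennreal_gen[of "\<lambda>ws. pc d U y ws z"] by (simp add: add.commute)
  also have "\<dots> = dU d U x y + dU d U y z"
    unfolding dU_def using INF_add_ennreal_gen[of "\<lambda>zs. pc d U x zs y"] by simp
  finally show "dU d U x z \<le> dU d U x y + dU d U y z" .
qed

primrec FF :: "('a \<Rightarrow> 'a \<Rightarrow> ennreal) \<Rightarrow> ('a \<Rightarrow> 'a) set \<Rightarrow> ennreal \<Rightarrow> nat \<Rightarrow> 'a \<Rightarrow> 'a set" where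
  "FF d V r 0 w = ball_d d w r"
| "FF d V r (Suc n) w = (\<Union>x\<in>ball_d d w r. \<Union>v\<in>V. FF d V r n (v x))"

definition VV :: "('a \<Rightarrow> 'a) set \<Rightarrow> ('a \<Rightarrow> 'a) set" where
  "VV U = insert id (U \<union> (\<lambda>u. inv_into UNIV u) ` U)"

lemma FF_mono_Suc:
  assumes "gen_metric d" "0 < r" "id \<in> V"
  shows "FF d V r n w \<subseteq> FF d V r (Suc n) w"
proof -
  have "d w w = 0" using assms(1) unfolding gen_metric_def by blast
  then have "w \<in> ball_d d w r" using assms unfolding ball_d_def by simp
  show ?thesis
  proof
    fix y assume "y \<in> FF d V r n w"
    then have "y \<in> FF d V r n (id w)" by simp
    then show "y \<in> FF d V r (Suc n) w" using \<open>w \<in> ball_d d w r\<close> assms(3)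
      by (simp only: FF.simps) blast
  qed
qed

lemma ball_sub_FF:
  assumes "gen_metric d" "0 < r" "id \<in> V"
  shows "ball_d d w r \<subseteq> FF d V r n w"
proof (induction n)
  case 0 then show ?case by simp
next
  case (Suc n) then show ?case using FF_mono_Suc[OF assms, of n w] by blast
qed

lemma self_in_FF:
  assumes "gen_metric d" "0 < r" "id \<in> V"
  shows "w \<in> FF d V r n w"
proof -
  have "d w w = 0" using assms(1) unfolding gen_metric_def by blast
  then show ?thesis using ball_sub_FF[OF assms, of w n] assms(2) unfolding ball_d_def by auto
qed

lemma step_in_VV:
  assumes "\<forall>u\<in>U. bij u" "u \<in> U" "z = u x \<or> x = u z"
  shows "\<exists>v\<in>VV U. z = v x"
proof (cases "z = u x")
  case True then show ?thesis using assms(2) unfolding VV_def by blast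
next
  case False
  then have "x = u z" using assms(3) by blast
  have "inj u" using assms(1,2) by (simp add: bij_is_inj)
  then have "inv_into UNIV u (u z) = z" by (rule inv_into_f_f) simp
  then have "z = inv_into UNIV u x" using \<open>x = u z\<close> by simp
  then show ?thesis using assms(2) unfolding VV_def by blast
qed

lemma ennreal_one_less_Suc:
  fixes p :: ennreal
  assumes "1 + p < of_nat n + 1"
  shows "\<exists>m. n = Suc m \<and> p < of_nat m + 1"
proof (cases n)
  case 0
  then have "1 + p < 1" using assms by simp
  moreover have "(1::ennreal) \<le> 1 + p" by simp
  ultimately show ?thesis by (simp add: not_le[symmetric])
next
  case (Suc m)
  then have "1 + p < 1 + (of_nat m + 1)" using assms by (simp add: add_ac)
  then have "p < of_nat m + 1" using ennreal_add_left_cancel_less by blast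
  then show ?thesis using Suc by blast
qed

lemma claim_FF:
  assumes gm: "gen_metric d" and bij: "\<forall>u\<in>U. bij u"
  shows "d w x + pc d U x zs y < r \<Longrightarrow> pc d U x zs y < of_nat n + 1 \<Longrightarrow> y \<in> FF d (VV U) r n w"
proof (induction zs arbitrary: w x n)
  case Nil
  have idV: "id \<in> VV U" unfolding VV_def by simp
  have tri: "\<And>a b c. d a c \<le> d a b + d b c" using gm unfolding gen_metric_def by blast
  from stepc_cases[of d U x y] show ?case
  proof
    assume h: "stepc d U x y = d x y"
    have "d w y < r" using Nil(1) h tri[where a=w and b=x and c=y] by (simp add: le_less_trans)
    then have "0 < r" by (simp add: le_less_trans)
    show ?thesis using ball_sub_FF[OF gm \<open>0 < r\<close> idV] \<open>d w y < r\<close> unfolding ball_d_def by blast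
  next
    assume h: "stepc d U x y = 1 \<and> (\<exists>u\<in>U. y = u x \<or> x = u y)"
    then obtain v where v: "v \<in> VV U" "y = v x" using step_in_VV[OF bij] by blast
    have "d w x + 1 < r" using Nil(1) h by simp
    moreover have "d w x \<le> d w x + 1" by simp
    ultimately have dwx: "d w x < r" by (simp only: le_less_trans)
    have "0 < r" using \<open>d w x + 1 < r\<close> by (simp add: le_less_trans)
    have "(1::ennreal) + 0 < of_nat n + 1" using Nil(2) h[THEN conjunct1] by (simp only: pc.simps add_0_right)
    then obtain m where m: "n = Suc m" using ennreal_one_less_Suc by blast
    have "y \<in> FF d (VV U) r m (v x)" using self_in_FF[OF gm \<open>0 < r\<close> idV] v by simp
    moreover have "x \<in> ball_d d w r" using dwx unfolding ball_d_def by simp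
    ultimately show ?thesis unfolding m FF.simps using v(1) by blast
  qed
next
  case (Cons z zs)
  have idV: "id \<in> VV U" unfolding VV_def by simp
  have tri: "\<And>a b c. d a c \<le> d a b + d b c" using gm unfolding gen_metric_def by blast
  let ?p = "pc d U z zs y"
  from stepc_cases[of d U x z] show ?case
  proof
    assume h: "stepc d U x z = d x z"
    have "d w z + ?p \<le> d w x + (d x z + ?p)"
      using add_right_mono[OF tri[where a=w and b=x and c=z], of ?p] by (simp only: add.assoc)
    moreover have "d w x + (d x z + ?p) < r" using Cons(2) h by simp
    ultimately have a: "d w z + ?p < r" by (rule le_less_trans)
    have le: "?p \<le> stepc d U x z + ?p" by simp
    have "stepc d U x z + ?p < of_nat n + 1" using Cons(3) by simp
    then have b: "?p < of_nat n + 1" by (rule le_less_trans[OF le])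
    show ?thesis using Cons.IH[OF a b] .
  next
    assume h: "stepc d U x z = 1 \<and> (\<exists>u\<in>U. z = u x \<or> x = u z)"
    then obtain v where v: "v \<in> VV U" "z = v x" using step_in_VV[OF bij] by blast
    have s: "d w x + (1 + ?p) < r" using Cons(2) h by simp
    have "d w x \<le> d w x + (1 + ?p)" by simp
    then have dwx: "d w x < r" by (rule le_less_trans[OF _ s])
    have "?p \<le> d w x + (1 + ?p)" by (simp add: add_increasing)
    then have a0: "?p < r" by (rule le_less_trans[OF _ s])
    have "d z z = 0" using gm unfolding gen_metric_def by blast
    then have a: "d z z + ?p < r" using a0 by simp
    have "1 + ?p < of_nat n + 1" using Cons(3) h by simp
    then obtain m where m: "n = Suc m" "?p < of_nat m + 1" using ennreal_one_less_Suc by blast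
    have "y \<in> FF d (VV U) r m z" using Cons.IH[OF a m(2)] .
    then have "y \<in> FF d (VV U) r m (v x)" using v(2) by simp
    moreover have "x \<in> ball_d d w r" using dwx unfolding ball_d_def by simp
    ultimately show ?thesis unfolding m(1) FF.simps using v(1) by blast
  qed
qed

lemma ball_dU_sub_FF:
  assumes gm: "gen_metric d" and bij: "\<forall>u\<in>U. bij u" and r: "r < \<infinity>"
  shows "\<exists>n. \<forall>w. ball_d (dU d U) w r \<subseteq> FF d (VV U) r n w"
proof -
  obtain n where n: "r < of_nat n" using ennreal_Ex_less_of_nat r by (metis infinity_ennreal_def)
  have "ball_d (dU d U) w r \<subseteq> FF d (VV U) r n w" for w
  proof
    fix y assume "y \<in> ball_d (dU d U) w r"
    then have "(INF zs. pc d U w zs y) < r" unfolding ball_d_def dU_def by simp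
    then obtain zs where zs: "pc d U w zs y < r" by (auto simp: INF_less_iff)
    have "d w w = 0" using gm unfolding gen_metric_def by blast
    then have a: "d w w + pc d U w zs y < r" using zs by simp
    have "r \<le> of_nat n + 1" using n by (simp add: add_increasing2 less_imp_le)
    then have b: "pc d U w zs y < of_nat n + 1" using zs by (simp add: less_le_trans)
    show "y \<in> FF d (VV U) r n w" using claim_FF[OF gm bij a b] .
  qed
  then show ?thesis by blast
qed


section \<open>Cardinal bookkeeping\<close>

lemma UN_pair_gen: "(\<Union>x\<in>A. \<Union>v\<in>V. F v x) = (\<Union>p\<in>A \<times> V. F (snd p) (fst p))"
  by force

locale regk =
  fixes k :: "'k rel"
  assumes card_k: "Card_order k" and inf_k: "infinite (Field k)" and reg_k: "regularCard k"
begin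

lemma union_less:
  assumes "|I| <o k" "\<forall>i\<in>I. |A i| <o k"
  shows "|\<Union>i\<in>I. A i| <o k"
  using card_of_UNION_ordLess_infinite_Field_regularCard[OF reg_k _ assms] card_k inf_k
  unfolding cinfinite_def by blast

lemma finite_less: "finite A \<Longrightarrow> |A| <o k"
  using finite_ordLess_infinite[of "|A|" k] card_of_Well_order[of A] inf_k card_k
  by (simp add: card_order_on_well_order_on Field_card_of)

lemma un_less: "|A| <o k \<Longrightarrow> |B| <o k \<Longrightarrow> |A \<union> B| <o k"
  using card_of_Un_ordLess_infinite_Field[OF inf_k card_k] by blast

lemma VV_less: assumes "|U| <o k" shows "|VV U| <o k"
proof -
  have "|(\<lambda>u. inv_into UNIV u) ` U| <o k"
    using card_of_image ordLeq_ordLess_trans assms by blast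
  then have "|U \<union> (\<lambda>u. inv_into UNIV u) ` U| <o k" using un_less assms by blast
  moreover have "|{id :: 'a \<Rightarrow> 'a}| <o k" by (rule finite_less) simp
  ultimately show ?thesis unfolding VV_def using un_less[of "{id}"] by simp
qed

lemma times_less:
  assumes "|A| <o k" "|B| <o k" shows "|A \<times> B| <o k"
proof -
  have "A \<times> B = (\<Union>a\<in>A. Pair a ` B)" by auto
  moreover have "\<forall>a\<in>A. |Pair a ` B| <o k"
    using card_of_image ordLeq_ordLess_trans assms(2) by blast
  ultimately show ?thesis using union_less[OF assms(1)] by simp
qed

lemma transfer_bound:
  fixes B :: "'b set"
  assumes "|B| <o k" "k \<le>o |UNIV :: 'a set|"
  shows "\<exists>S :: 'a set. |S| <o k \<and> |B| \<le>o |S|"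
proof -
  have "|B| \<le>o |UNIV :: 'a set|" using assms ordLess_ordLeq_trans ordLess_imp_ordLeq by blast
  then obtain f :: "'b \<Rightarrow> 'a" where f: "inj_on f B" using card_of_ordLeq[of B "UNIV :: 'a set"] by blast
  then have "|B| =o |f ` B|" using card_of_ordIsoI inj_on_imp_bij_betw by blast
  then show ?thesis using assms(1)
    by (meson ordIso_iff_ordLeq ordLeq_ordLess_trans)
qed

lemma FF_less:
  assumes unc: "uncrowded k d" and r: "r < \<infinity>" and V: "|V| <o k"
  shows "|FF d V r n w| <o k"
proof (induction n arbitrary: w)
  case 0 then show ?case using unc r unfolding uncrowded_def by simp
next
  case (Suc n)
  have "|ball_d d w r| <o k" using unc r unfolding uncrowded_def by simp
  moreover have "\<forall>x\<in>ball_d d w r. |\<Union>v\<in>V. FF d V r n (v x)| <o k"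
  proof
    fix x
    have "\<forall>v\<in>V. |FF d V r n (v x)| <o k" using Suc.IH by blast
    then show "|\<Union>v\<in>V. FF d V r n (v x)| <o k" by (rule union_less[OF V])
  qed
  ultimately have "|\<Union>x\<in>ball_d d w r. \<Union>v\<in>V. FF d V r n (v x)| <o k" by (rule union_less)
  then show ?case by (simp only: FF.simps)
qed

lemma FF_unif:
  fixes l :: "'a rel"
  assumes l: "Card_order l" "l <o k" "\<forall>x. |ball_d d x r| \<le>o l"
    and V: "|V| <o k" and kle: "k \<le>o |UNIV :: 'a set|"
  shows "\<exists>S :: 'a set. |S| <o k \<and> (\<forall>w. |FF d V r n w| \<le>o |S| )"
proof (induction n)
  case 0
  have "|Field l| =o l" using card_of_Field_ordIso[OF l(1)] .
  have "\<forall>w. |FF d V r 0 w| \<le>o |Field l|"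
  proof
    fix w
    have "|ball_d d w r| \<le>o |Field l|"
      using l(3) ordIso_symmetric[OF \<open>|Field l| =o l\<close>] ordLeq_ordIso_trans by blast
    then show "|FF d V r 0 w| \<le>o |Field l|" by (simp only: FF.simps)
  qed
  moreover have "|Field l| <o k" using \<open>|Field l| =o l\<close> l(2) ordIso_ordLess_trans by blast
  ultimately show ?case by blast
next
  case (Suc n)
  then obtain S :: "'a set" where S: "|S| <o k" "\<forall>w. |FF d V r n w| \<le>o |S|" by blast
  let ?B = "(Field l \<times> V) \<times> S"
  have bl: "|Field l| <o k" using card_of_Field_ordIso[OF l(1)] l(2) ordIso_ordLess_trans by blast
  have B: "|?B| <o k" using times_less[OF times_less[OF bl V] S(1)] .
  have "|FF d V r (Suc n) w| \<le>o |?B|" for w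
  proof -
    let ?I = "ball_d d w r \<times> V"
    have eq: "FF d V r (Suc n) w = (\<Union>p\<in>?I. FF d V r n (snd p (fst p)))"
      by (simp only: FF.simps UN_pair_gen)
    have "|\<Union>p\<in>?I. FF d V r n (snd p (fst p))| \<le>o |SIGMA p:?I. FF d V r n (snd p (fst p))|"
      by (rule card_of_UNION_Sigma)
    also have "|SIGMA p:?I. FF d V r n (snd p (fst p))| \<le>o |?I \<times> S|"
      using card_of_Sigma_mono1[of ?I "\<lambda>p. FF d V r n (snd p (fst p))" "\<lambda>_. S"] S(2) by blast
    also have "|?I \<times> S| \<le>o |?B|"
    proof -
      have "|ball_d d w r| \<le>o |Field l|"
        using l(3) ordIso_symmetric[OF card_of_Field_ordIso[OF l(1)]] ordLeq_ordIso_trans by blast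
      then have "|?I| \<le>o |Field l \<times> V|" by (rule card_of_Times_mono1)
      then show ?thesis by (rule card_of_Times_mono1)
    qed
    finally show ?thesis using eq by simp
  qed
  note fb = this
  obtain S' :: "'a set" where S': "|S'| <o k" "|?B| \<le>o |S'|" using transfer_bound[OF B kle] by blast
  have "|FF d V r (Suc n) w| \<le>o |S'|" for w by (rule ordLeq_transitive[OF fb S'(2)])
  then show ?case using S'(1) by blast
qed

end



section \<open>Boundedness\<close>

lemma bounded_by:
  assumes "\<And>x. d x (g x) \<le> C" "C < \<infinity>" shows "bounded_perm d g"
proof -
  have "perm_norm d g \<le> C" unfolding perm_norm_def by (rule SUP_least) (rule assms(1))
  then show ?thesis unfolding bounded_perm_def using assms(2) by (rule le_less_trans)
qed

lemma le_norm: "d x (g x) \<le> perm_norm d g"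
  unfolding perm_norm_def by (rule SUP_upper) simp

lemma Sym_mult: "g \<in> carrier Sym \<Longrightarrow> h \<in> carrier Sym \<Longrightarrow> (g \<otimes>\<^bsub>Sym\<^esub> h) x = g (h x)"
  by (simp add: BijGroup_def compose_def)

lemma Sym_one: "\<one>\<^bsub>Sym\<^esub> x = x"
  by (simp add: BijGroup_def)

lemma gen_bounded:
  assumes gm: "gen_metric d" and H: "H \<subseteq> carrier Sym" and b: "\<forall>h\<in>H. bounded_perm d h"
  shows "g \<in> generate Sym H \<Longrightarrow> bounded_perm d g"
proof (induction rule: generate.induct)
  case one
  have "d x (\<one>\<^bsub>Sym\<^esub> x) \<le> 0" for x using gm unfolding gen_metric_def by (simp add: Sym_one)
  then show ?case by (rule bounded_by) simp
next
  case (incl h) then show ?case using b by blast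
next
  case (inv h)
  have grp: "group Sym" by (rule group_BijGroup)
  have hc: "h \<in> carrier Sym" using inv H by blast
  then have ic: "inv\<^bsub>Sym\<^esub> h \<in> carrier Sym" using group.inv_closed[OF grp] by blast
  have "h \<otimes>\<^bsub>Sym\<^esub> inv\<^bsub>Sym\<^esub> h = \<one>\<^bsub>Sym\<^esub>" using group.r_inv[OF grp hc] .
  then have "(h \<otimes>\<^bsub>Sym\<^esub> inv\<^bsub>Sym\<^esub> h) x = x" for x by (simp only: Sym_one)
  then have hi: "h ((inv\<^bsub>Sym\<^esub> h) x) = x" for x by (simp only: Sym_mult[OF hc ic])
  have "d x ((inv\<^bsub>Sym\<^esub> h) x) \<le> perm_norm d h" for x
  proof -
    let ?y = "(inv\<^bsub>Sym\<^esub> h) x"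
    have "d (h ?y) ?y = d ?y (h ?y)" using gm unfolding gen_metric_def by blast
    then have "d x ?y = d ?y (h ?y)" by (simp only: hi)
    then show ?thesis using le_norm[of d ?y h] by simp
  qed
  moreover have "perm_norm d h < \<infinity>" using b inv(1) unfolding bounded_perm_def by blast
  ultimately show ?case by (rule bounded_by)
next
  case (eng h1 h2)
  have grp: "group Sym" by (rule group_BijGroup)
  have c1: "h1 \<in> carrier Sym" using group.generate_in_carrier[OF grp H eng(1)] .
  have c2: "h2 \<in> carrier Sym" using group.generate_in_carrier[OF grp H eng(2)] .
  have "d x ((h1 \<otimes>\<^bsub>Sym\<^esub> h2) x) \<le> perm_norm d h2 + perm_norm d h1" for x
  proof -
    have "d x (h1 (h2 x)) \<le> d x (h2 x) + d (h2 x) (h1 (h2 x))" using gm unfolding gen_metric_def by blast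
    also have "\<dots> \<le> perm_norm d h2 + perm_norm d h1" by (intro add_mono le_norm)
    finally show ?thesis using Sym_mult[OF c1 c2] by simp
  qed
  moreover have "perm_norm d h2 + perm_norm d h1 < \<infinity>" using eng(3,4) unfolding bounded_perm_def
    by (simp add: ennreal_add_less_top infinity_ennreal_def)
  ultimately show ?case by (rule bounded_by)
qed


lemma Sym_bij: "u \<in> carrier Sym \<Longrightarrow> bij u"
  by (simp add: BijGroup_def Bij_def)

lemma common:
  assumes gm: "gen_metric d" and G: "subgroup G Sym" and bG: "\<forall>g\<in>G. bounded_perm d g"
    and U: "U \<subseteq> carrier Sym"
  shows "gen_metric (dU d U) \<and> le_metric (dU d U) d \<and> (\<forall>g\<in>U. bounded_perm (dU d U) g) \<and>
         (\<forall>g\<in>generate Sym (G \<union> U). bounded_perm (dU d U) g)"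
proof -
  have gm': "gen_metric (dU d U)" by (rule dU_metric[OF gm])
  have le: "le_metric (dU d U) d" unfolding le_metric_def by (intro allI) (rule dU_le)
  have bU: "\<forall>g\<in>U. bounded_perm (dU d U) g"
  proof
    fix g assume g: "g \<in> U"
    have "dU d U x (g x) \<le> 1" for x
      using dU_le_stepc[of d U x "g x"] stepc_le1[OF g, of d x] by (rule order_trans)
    then show "bounded_perm (dU d U) g" by (rule bounded_by) simp
  qed
  have bG': "\<forall>g\<in>G. bounded_perm (dU d U) g"
  proof
    fix g assume g: "g \<in> G"
    have "dU d U x (g x) \<le> perm_norm d g" for x
      using dU_le[of d U x "g x"] le_norm[of d x g] by (rule order_trans)
    moreover have "perm_norm d g < \<infinity>" using bG g unfolding bounded_perm_def by blast
    ultimately show "bounded_perm (dU d U) g" by (rule bounded_by)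
  qed
  have H: "G \<union> U \<subseteq> carrier Sym" using subgroup.subset[OF G] U by blast
  have "\<forall>g\<in>G \<union> U. bounded_perm (dU d U) g" using bU bG' by blast
  then have "\<forall>g\<in>generate Sym (G \<union> U). bounded_perm (dU d U) g" using gen_bounded[OF gm' H] by blast
  then show ?thesis using gm' le bU by blast
qed

lemma part1:
  fixes k :: "'k rel" and d :: "'a \<Rightarrow> 'a \<Rightarrow> ennreal"
  assumes rk: "regk k" and gm: "gen_metric d" and unc: "uncrowded k d" and G: "subgroup G Sym"
    and bG: "\<forall>g\<in>G. bounded_perm d g" and U: "U \<subseteq> carrier Sym" and Uk: "|U| <o k"
  shows "\<exists>d'. gen_metric d' \<and> le_metric d' d \<and> uncrowded k d' \<and>
              (\<forall>g\<in>U. bounded_perm d' g) \<and> (\<forall>g\<in>generate Sym (G \<union> U). bounded_perm d' g)"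
proof -
  have bij: "\<forall>u\<in>U. bij u" using U Sym_bij by blast
  have V: "|VV U| <o k" using regk.VV_less[OF rk Uk] .
  have "uncrowded k (dU d U)" unfolding uncrowded_def
  proof (intro allI impI)
    fix x r assume r: "r < (\<infinity>::ennreal)"
    obtain n where n: "\<forall>w. ball_d (dU d U) w r \<subseteq> FF d (VV U) r n w"
      using ball_dU_sub_FF[OF gm bij r] by blast
    have "|FF d (VV U) r n x| <o k" using regk.FF_less[OF rk unc r V] .
    moreover have "|ball_d (dU d U) x r| \<le>o |FF d (VV U) r n x|" using n card_of_mono1 by blast
    ultimately show "|ball_d (dU d U) x r| <o k" using ordLeq_ordLess_trans by blast
  qed
  then show ?thesis using common[OF gm G bG U] by blast
qed

lemma part2:
  fixes k :: "'k rel" and d :: "'a \<Rightarrow> 'a \<Rightarrow> ennreal"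
  assumes rk: "regk k" and kle: "k \<le>o |UNIV :: 'a set|"
    and gm: "gen_metric d" and unc: "unif_uncrowded k d" and G: "subgroup G Sym"
    and bG: "\<forall>g\<in>G. bounded_perm d g" and U: "U \<subseteq> carrier Sym" and Uk: "|U| <o k"
  shows "\<exists>d'. gen_metric d' \<and> le_metric d' d \<and> unif_uncrowded k d' \<and>
              (\<forall>g\<in>U. bounded_perm d' g) \<and> (\<forall>g\<in>generate Sym (G \<union> U). bounded_perm d' g)"
proof -
  have bij: "\<forall>u\<in>U. bij u" using U Sym_bij by blast
  have V: "|VV U| <o k" using regk.VV_less[OF rk Uk] .
  have "unif_uncrowded k (dU d U)" unfolding unif_uncrowded_def
  proof (intro allI impI)
    fix r assume r: "r < (\<infinity>::ennreal)"
    obtain l :: "'a rel" where l: "Card_order l" "l <o k" "\<forall>x. |ball_d d x r| \<le>o l"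
      using unc r unfolding unif_uncrowded_def by blast
    obtain n where n: "\<forall>w. ball_d (dU d U) w r \<subseteq> FF d (VV U) r n w"
      using ball_dU_sub_FF[OF gm bij r] by blast
    obtain S :: "'a set" where S: "|S| <o k" "\<forall>w. |FF d (VV U) r n w| \<le>o |S|"
      using regk.FF_unif[OF rk l V kle] by blast
    have "|ball_d (dU d U) x r| \<le>o |S|" for x
    proof -
      have "|ball_d (dU d U) x r| \<le>o |FF d (VV U) r n x|" using n card_of_mono1 by blast
      then show ?thesis using S(2) ordLeq_transitive by blast
    qed
    then show "\<exists>l :: 'a rel. Card_order l \<and> l <o k \<and> (\<forall>x. |ball_d (dU d U) x r| \<le>o l)"
      using S(1) card_of_Card_order by blast
  qed
  then show ?thesis using common[OF gm G bG U] by blast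
qed

theorem theorem3p2:
  fixes k :: "'k rel"
  assumes inf_Omega: "infinite (UNIV :: 'a set)"
    and card_k: "Card_order k" and inf_k: "infinite (Field k)" and reg_k: "regularCard k"
    and k_le: "k \<le>o |UNIV :: 'a set|"
  shows
    "(\<forall>(d :: 'a \<Rightarrow> 'a \<Rightarrow> ennreal) G U.
        gen_metric d \<and> uncrowded k d \<and> subgroup G Sym \<and> (\<forall>g\<in>G. bounded_perm d g) \<and>
        U \<subseteq> carrier Sym \<and> |U| <o k \<longrightarrow>
        (\<exists>d'. gen_metric d' \<and> le_metric d' d \<and> uncrowded k d' \<and>
              (\<forall>g\<in>U. bounded_perm d' g) \<and> (\<forall>g\<in>generate Sym (G \<union> U). bounded_perm d' g)))
   \<and> (\<forall>(d :: 'a \<Rightarrow> 'a \<Rightarrow> ennreal) G U.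
        gen_metric d \<and> unif_uncrowded k d \<and> subgroup G Sym \<and> (\<forall>g\<in>G. bounded_perm d g) \<and>
        U \<subseteq> carrier Sym \<and> |U| <o k \<longrightarrow>
        (\<exists>d'. gen_metric d' \<and> le_metric d' d \<and> unif_uncrowded k d' \<and>
              (\<forall>g\<in>U. bounded_perm d' g) \<and> (\<forall>g\<in>generate Sym (G \<union> U). bounded_perm d' g)))
   \<and> (\<forall>(G :: ('a \<Rightarrow> 'a) set) H.
        subgroup G Sym \<and> subgroup H Sym \<and> preceq_k k H G \<and>
        (\<exists>d. gen_metric d \<and> uncrowded k d \<and> (\<forall>g\<in>G. bounded_perm d g)) \<longrightarrow>
        (\<exists>d. gen_metric d \<and> uncrowded k d \<and> (\<forall>h\<in>H. bounded_perm d h)))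
   \<and> (\<forall>(G :: ('a \<Rightarrow> 'a) set) H.
        subgroup G Sym \<and> subgroup H Sym \<and> preceq_k k H G \<and>
        (\<exists>d. gen_metric d \<and> unif_uncrowded k d \<and> (\<forall>g\<in>G. bounded_perm d g)) \<longrightarrow>
        (\<exists>d. gen_metric d \<and> unif_uncrowded k d \<and> (\<forall>h\<in>H. bounded_perm d h)))
   \<and> (\<forall>(G :: ('a \<Rightarrow> 'a) set) H.
        subgroup G Sym \<and> subgroup H Sym \<and> approx_k k H G \<and>
        (\<exists>d. gen_metric d \<and> uncrowded k d \<and> (\<forall>g\<in>G. bounded_perm d g)) \<longrightarrow>
        (\<exists>d. gen_metric d \<and> uncrowded k d \<and> (\<forall>h\<in>H. bounded_perm d h)))
   \<and> (\<forall>(G :: ('a \<Rightarrow> 'a) set) H.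
        subgroup G Sym \<and> subgroup H Sym \<and> approx_k k H G \<and>
        (\<exists>d. gen_metric d \<and> unif_uncrowded k d \<and> (\<forall>g\<in>G. bounded_perm d g)) \<longrightarrow>
        (\<exists>d. gen_metric d \<and> unif_uncrowded k d \<and> (\<forall>h\<in>H. bounded_perm d h)))"
  proof -
  have rk: "regk k" using card_k inf_k reg_k by unfold_locales
  have p1: "\<exists>d'. gen_metric d' \<and> le_metric d' d \<and> uncrowded k d' \<and>
              (\<forall>g\<in>U. bounded_perm d' g) \<and> (\<forall>g\<in>generate Sym (G \<union> U). bounded_perm d' g)"
    if "gen_metric d \<and> uncrowded k d \<and> subgroup G Sym \<and> (\<forall>g\<in>G. bounded_perm d g) \<and>
        U \<subseteq> carrier Sym \<and> |U| <o k" for d :: "'a \<Rightarrow> 'a \<Rightarrow> ennreal" and G U :: "('a \<Rightarrow> 'a) set"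
    using that part1[OF rk, of d G U] by blast
  have p2: "\<exists>d'. gen_metric d' \<and> le_metric d' d \<and> unif_uncrowded k d' \<and>
              (\<forall>g\<in>U. bounded_perm d' g) \<and> (\<forall>g\<in>generate Sym (G \<union> U). bounded_perm d' g)"
    if "gen_metric d \<and> unif_uncrowded k d \<and> subgroup G Sym \<and> (\<forall>g\<in>G. bounded_perm d g) \<and>
        U \<subseteq> carrier Sym \<and> |U| <o k" for d :: "'a \<Rightarrow> 'a \<Rightarrow> ennreal" and G U :: "('a \<Rightarrow> 'a) set"
    using that part2[OF rk k_le, of d G U] by blast
  have p3: "\<exists>d. gen_metric d \<and> uncrowded k d \<and> (\<forall>h\<in>H. bounded_perm d h)"
    if hh: "subgroup G Sym" "preceq_k k H G" "gen_metric d" "uncrowded k d" "\<forall>g\<in>G. bounded_perm d g"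
    for G H :: "('a \<Rightarrow> 'a) set" and d
  proof -
    obtain U where U: "U \<subseteq> carrier Sym" "|U| <o k" "H \<subseteq> generate Sym (G \<union> U)"
      using hh(2) unfolding preceq_k_def by blast
    obtain d' where d': "gen_metric d'" "uncrowded k d'" "\<forall>g\<in>generate Sym (G \<union> U). bounded_perm d' g"
      using part1[OF rk hh(3,4,1,5) U(1,2)] by blast
    then show ?thesis using U(3) by blast
  qed
  have p4: "\<exists>d. gen_metric d \<and> unif_uncrowded k d \<and> (\<forall>h\<in>H. bounded_perm d h)"
    if hh: "subgroup G Sym" "preceq_k k H G" "gen_metric d" "unif_uncrowded k d" "\<forall>g\<in>G. bounded_perm d g"
    for G H :: "('a \<Rightarrow> 'a) set" and d
  proof -
    obtain U where U: "U \<subseteq> carrier Sym" "|U| <o k" "H \<subseteq> generate Sym (G \<union> U)"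
      using hh(2) unfolding preceq_k_def by blast
    obtain d' where d': "gen_metric d'" "unif_uncrowded k d'" "\<forall>g\<in>generate Sym (G \<union> U). bounded_perm d' g"
      using part2[OF rk k_le hh(3,4,1,5) U(1,2)] by blast
    then show ?thesis using U(3) by blast
  qed
  show ?thesis
  proof (intro conjI allI impI)
    fix d :: "'a \<Rightarrow> 'a \<Rightarrow> ennreal" and G U :: "('a \<Rightarrow> 'a) set"
    assume a: "gen_metric d \<and> uncrowded k d \<and> subgroup G Sym \<and> (\<forall>g\<in>G. bounded_perm d g) \<and>
        U \<subseteq> carrier Sym \<and> |U| <o k"
    show "\<exists>d'. gen_metric d' \<and> le_metric d' d \<and> uncrowded k d' \<and>
              (\<forall>g\<in>U. bounded_perm d' g) \<and> (\<forall>g\<in>generate Sym (G \<union> U). bounded_perm d' g)"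
      by (rule p1[OF a])
  next
    fix d :: "'a \<Rightarrow> 'a \<Rightarrow> ennreal" and G U :: "('a \<Rightarrow> 'a) set"
    assume a: "gen_metric d \<and> unif_uncrowded k d \<and> subgroup G Sym \<and> (\<forall>g\<in>G. bounded_perm d g) \<and>
        U \<subseteq> carrier Sym \<and> |U| <o k"
    show "\<exists>d'. gen_metric d' \<and> le_metric d' d \<and> unif_uncrowded k d' \<and>
              (\<forall>g\<in>U. bounded_perm d' g) \<and> (\<forall>g\<in>generate Sym (G \<union> U). bounded_perm d' g)"
      by (rule p2[OF a])
  next
    fix G H :: "('a \<Rightarrow> 'a) set"
    assume a: "subgroup G Sym \<and> subgroup H Sym \<and> preceq_k k H G \<and>
        (\<exists>d. gen_metric d \<and> uncrowded k d \<and> (\<forall>g\<in>G. bounded_perm d g))"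
    then show "\<exists>d. gen_metric d \<and> uncrowded k d \<and> (\<forall>h\<in>H. bounded_perm d h)"
      using p3 by blast
  next
    fix G H :: "('a \<Rightarrow> 'a) set"
    assume a: "subgroup G Sym \<and> subgroup H Sym \<and> preceq_k k H G \<and>
        (\<exists>d. gen_metric d \<and> unif_uncrowded k d \<and> (\<forall>g\<in>G. bounded_perm d g))"
    then show "\<exists>d. gen_metric d \<and> unif_uncrowded k d \<and> (\<forall>h\<in>H. bounded_perm d h)"
      using p4 by blast
  next
    fix G H :: "('a \<Rightarrow> 'a) set"
    assume a: "subgroup G Sym \<and> subgroup H Sym \<and> approx_k k H G \<and>
        (\<exists>d. gen_metric d \<and> uncrowded k d \<and> (\<forall>g\<in>G. bounded_perm d g))"
    then show "\<exists>d. gen_metric d \<and> uncrowded k d \<and> (\<forall>h\<in>H. bounded_perm d h)"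
      using p3 unfolding approx_k_def by blast
  next
    fix G H :: "('a \<Rightarrow> 'a) set"
    assume a: "subgroup G Sym \<and> subgroup H Sym \<and> approx_k k H G \<and>
        (\<exists>d. gen_metric d \<and> unif_uncrowded k d \<and> (\<forall>g\<in>G. bounded_perm d g))"
    then show "\<exists>d. gen_metric d \<and> unif_uncrowded k d \<and> (\<forall>h\<in>H. bounded_perm d h)"
      using p4 unfolding approx_k_def by blast
  qed
qed

end
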